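(* Let $\Lambda^\epsilon$ ($\epsilon>0$) be the smooth periodic solutions of the regularized problem $$\Lambda^\epsilon_t=\frac{\partial}{\partial s}\frac{d}{d\varphi}J^\epsilon(\Lambda^\epsilon_s+s),\qquad \Lambda^\epsilon(\cdot,0)=\Lambda^\epsilon_0,$$ whose smooth periodic initial data are such that $\varphi^\epsilon_0=\Lambda^\epsilon_{0,s}+s$ satisfy $\sup_\epsilon\|\varphi^\epsilon_0\|_{L_\infty(0,2\pi)}<\infty$ and $\sup_\epsilon\|(\varphi^\epsilon_0)_s\|_{L_1(0,2\pi)}<\infty$. Put $\varphi^\epsilon=\Lambda^\epsilon_s+s$. Then there is a constant $M$, independent of $\epsilon$ and $T$, such that $$\|\varphi^\epsilon\|_{L_\infty(S\times(0,T))}\le M,\qquad \|\varphi^\epsilon\|_{L_\infty(0,T;TV[0,2\pi))}\le M.$$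
   Context: $S$ is the unit circle, identified with $[0,2\pi)$. Let $$J(\varphi)=\frac{\pi}{4}\Big(|\varphi-\tfrac{3\pi}{4}|+|\varphi-\tfrac{\pi}{4}|+|\varphi+\tfrac{\pi}{4}|+|\varphi+\tfrac{3\pi}{4}|\Big).$$ For $\epsilon>0$ put $J^\epsilon(x)=(J\star\rho_\epsilon)(x)+\frac{\epsilon^2}{2}x^2$, where $\rho_\epsilon$ is a standard mollifier supported in $(-\epsilon,\epsilon)$. $TV$ denotes the space of functions of bounded variation. *)

theory Defs
  imports "HOL-Analysis.Analysis" "HOL-Library.Extended_Real"
begin

definition J :: "real \<Rightarrow> real" where
  "J \<phi> = pi / 4 * (\<bar>\<phi> - 3*pi/4\<bar> + \<bar>\<phi> - pi/4\<bar> + \<bar>\<phi> + pi/4\<bar> + \<bar>\<phi> + 3*pi/4\<bar>)"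

definition bump :: "real \<Rightarrow> real" where
  "bump x = (if \<bar>x\<bar> < 1 then exp (- 1 / (1 - x\<^sup>2)) else 0)"

definition mollifier :: "real \<Rightarrow> real" where
  "mollifier x = bump x / integral {-1..1} bump"

definition mollifier_eps :: "real \<Rightarrow> real \<Rightarrow> real" where
  "mollifier_eps \<epsilon> x = mollifier (x / \<epsilon>) / \<epsilon>"

definition Jeps :: "real \<Rightarrow> real \<Rightarrow> real" where
  "Jeps \<epsilon> x = integral UNIV (\<lambda>y. J (x - y) * mollifier_eps \<epsilon> y) + \<epsilon>\<^sup>2 / 2 * x\<^sup>2"

text \<open>C-infinity functions of two real variables: there is a family of everywhere
  (Frechet) differentiable functions containing f and closed under both partial derivatives.\<close>
definition smooth2 :: "(real \<times> real \<Rightarrow> real) \<Rightarrow> bool" where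
  "smooth2 f \<longleftrightarrow> (\<exists>F. f \<in> F \<and> (\<forall>g\<in>F. g differentiable_on UNIV \<and>
      (\<lambda>z. frechet_derivative g (at z) (1, 0)) \<in> F \<and>
      (\<lambda>z. frechet_derivative g (at z) (0, 1)) \<in> F))"

definition smooth1 :: "(real \<Rightarrow> real) \<Rightarrow> bool" where
  "smooth1 f \<longleftrightarrow> (\<exists>F. f \<in> F \<and> (\<forall>g\<in>F. g differentiable_on UNIV \<and> deriv g \<in> F))"

definition total_variation :: "(real \<Rightarrow> real) \<Rightarrow> real set \<Rightarrow> ereal" where
  "total_variation f A = (SUP xs \<in> {xs. sorted xs \<and> set xs \<subseteq> A}.
      ereal (\<Sum>i<length xs - 1. \<bar>f (xs ! Suc i) - f (xs ! i)\<bar>))"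

end

theory Submission
  imports Defs
begin

definition Ds :: "(real \<times> real \<Rightarrow> real) \<Rightarrow> real \<times> real \<Rightarrow> real" where
  "Ds g = (\<lambda>z. frechet_derivative g (at z) (1, 0))"
definition Dt :: "(real \<times> real \<Rightarrow> real) \<Rightarrow> real \<times> real \<Rightarrow> real" where
  "Dt g = (\<lambda>z. frechet_derivative g (at z) (0, 1))"

lemma Ds_deriv:
  assumes "g differentiable (at (s, t))"
  shows "((\<lambda>r. g (r, t)) has_real_derivative Ds g (s, t)) (at s)"
proof -
  let ?D = "frechet_derivative g (at (s, t))"
  have g: "(g has_derivative ?D) (at (s, t))" using assms frechet_derivative_works by blast
  have lin: "linear ?D" using g has_derivative_linear by blast
  have p: "((\<lambda>r. (r, t)) has_derivative (\<lambda>h. (h, 0))) (at s)"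
    by (auto intro!: derivative_eq_intros)
  have "((\<lambda>r. g (r, t)) has_derivative (\<lambda>h. ?D (h, 0))) (at s)"
    using has_derivative_compose[OF p, of g ?D] g by (simp add: o_def)
  moreover have "\<And>h. ?D (h, 0) = Ds g (s, t) * h"
  proof -
    fix h :: real
    show "?D (h, 0) = Ds g (s, t) * h" using linear_cmul[OF lin, of h "(1,0)"] by (simp add: Ds_def)
  qed
  ultimately show ?thesis by (simp add: has_field_derivative_def)
qed

lemma Dt_deriv:
  assumes "g differentiable (at (s, t))"
  shows "((\<lambda>r. g (s, r)) has_real_derivative Dt g (s, t)) (at t)"
proof -
  let ?D = "frechet_derivative g (at (s, t))"
  have g: "(g has_derivative ?D) (at (s, t))" using assms frechet_derivative_works by blast
  have lin: "linear ?D" using g has_derivative_linear by blast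
  have p: "((\<lambda>r. (s, r)) has_derivative (\<lambda>h. (0, h))) (at t)"
    by (auto intro!: derivative_eq_intros)
  have "((\<lambda>r. g (s, r)) has_derivative (\<lambda>h. ?D (0, h))) (at t)"
    using has_derivative_compose[OF p, of g ?D] g by (simp add: o_def)
  moreover have "\<And>h. ?D (0, h) = Dt g (s, t) * h"
  proof -
    fix h :: real
    show "?D (0, h) = Dt g (s, t) * h" using linear_cmul[OF lin, of h "(0,1)"] by (simp add: Dt_def)
  qed
  ultimately show ?thesis by (simp add: has_field_derivative_def)
qed

lemma schwarz:
  assumes g: "\<And>z. g differentiable (at z)"
    and gs: "\<And>z. Ds g differentiable (at z)"
    and gt: "\<And>z. Dt g differentiable (at z)"
    and c1: "continuous_on UNIV (Dt (Ds g))"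
    and c2: "continuous_on UNIV (Ds (Dt g))"
  shows "Dt (Ds g) z = Ds (Dt g) z"
proof (rule ccontr)
  obtain s t where z: "z = (s, t)" by (cases z)
  define A where "A = Dt (Ds g) (s, t)"
  define B where "B = Ds (Dt g) (s, t)"
  assume "Dt (Ds g) z \<noteq> Ds (Dt g) z"
  hence AB: "A \<noteq> B" by (simp add: A_def B_def z)
  define e where "e = \<bar>A - B\<bar> / 2"
  have e: "e > 0" using AB by (simp add: e_def)
  have "isCont (Dt (Ds g)) (s, t)" using c1 by (simp add: continuous_on_eq_continuous_at)
  then obtain r1 where r1: "r1 > 0" "\<And>y. dist y (s, t) < r1 \<Longrightarrow> dist (Dt (Ds g) y) A < e"
    using e unfolding continuous_at_eps_delta A_def by metis
  have "isCont (Ds (Dt g)) (s, t)" using c2 by (simp add: continuous_on_eq_continuous_at)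
  then obtain r2 where r2: "r2 > 0" "\<And>y. dist y (s, t) < r2 \<Longrightarrow> dist (Ds (Dt g) y) B < e"
    using e unfolding continuous_at_eps_delta B_def by metis
  define h where "h = min r1 r2 / 2"
  have h: "h > 0" "2 * h \<le> r1" "2 * h \<le> r2" using r1 r2 by (auto simp: h_def)
  have close: "dist (x, y) (s, t) < 2 * h" if "s < x" "x < s + h" "t < y" "y < t + h" for x y
  proof -
    have "dist (x, y) (s, t) \<le> dist (x, y) (s, y) + dist (s, y) (s, t)" by (rule dist_triangle)
    also have "\<dots> = \<bar>x - s\<bar> + \<bar>y - t\<bar>" by (simp add: dist_Pair_Pair dist_real_def)
    also have "\<dots> < 2 * h" using that by auto
    finally show ?thesis .
  qed
  define \<Delta> where "\<Delta> = g (s + h, t + h) - g (s + h, t) - g (s, t + h) + g (s, t)"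
  obtain x1 where x1: "s < x1" "x1 < s + h"
    "\<Delta> = h * (Ds g (x1, t + h) - Ds g (x1, t))"
  proof -
    have "\<exists>x. s < x \<and> x < s + h \<and> ((\<lambda>x. g (x, t + h) - g (x, t)) (s + h) - (\<lambda>x. g (x, t + h) - g (x, t)) s
        = (s + h - s) * (Ds g (x, t + h) - Ds g (x, t)))"
      by (rule MVT2) (use h in \<open>auto intro!: derivative_eq_intros Ds_deriv g\<close>)
    then show ?thesis using that by (auto simp: \<Delta>_def algebra_simps)
  qed
  obtain y1 where y1: "t < y1" "y1 < t + h"
    "Ds g (x1, t + h) - Ds g (x1, t) = h * Dt (Ds g) (x1, y1)"
  proof -
    have "\<exists>y. t < y \<and> y < t + h \<and> ((\<lambda>y. Ds g (x1, y)) (t + h) - (\<lambda>y. Ds g (x1, y)) t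
        = (t + h - t) * Dt (Ds g) (x1, y))"
      by (rule MVT2) (use h in \<open>auto intro!: Dt_deriv gs\<close>)
    then show ?thesis using that by auto
  qed
  obtain y2 where y2: "t < y2" "y2 < t + h"
    "\<Delta> = h * (Dt g (s + h, y2) - Dt g (s, y2))"
  proof -
    have "\<exists>y. t < y \<and> y < t + h \<and> ((\<lambda>y. g (s + h, y) - g (s, y)) (t + h) - (\<lambda>y. g (s + h, y) - g (s, y)) t
        = (t + h - t) * (Dt g (s + h, y) - Dt g (s, y)))"
      by (rule MVT2) (use h in \<open>auto intro!: derivative_eq_intros Dt_deriv g\<close>)
    then show ?thesis using that by (auto simp: \<Delta>_def algebra_simps)
  qed
  obtain x2 where x2: "s < x2" "x2 < s + h"
    "Dt g (s + h, y2) - Dt g (s, y2) = h * Ds (Dt g) (x2, y2)"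
  proof -
    have "\<exists>x. s < x \<and> x < s + h \<and> ((\<lambda>x. Dt g (x, y2)) (s + h) - (\<lambda>x. Dt g (x, y2)) s
        = (s + h - s) * Ds (Dt g) (x, y2))"
      by (rule MVT2) (use h in \<open>auto intro!: Ds_deriv gt\<close>)
    then show ?thesis using that by auto
  qed
  have "h * h * Dt (Ds g) (x1, y1) = h * h * Ds (Dt g) (x2, y2)"
  proof -
    have "h * h * Dt (Ds g) (x1, y1) = \<Delta>" using x1(3) y1(3) by simp
    also have "\<dots> = h * h * Ds (Dt g) (x2, y2)" using y2(3) x2(3) by simp
    finally show ?thesis .
  qed
  hence eq: "Dt (Ds g) (x1, y1) = Ds (Dt g) (x2, y2)" using h by simp
  have "dist (Dt (Ds g) (x1, y1)) A < e" using r1(2)[of "(x1, y1)"] close[of x1 y1] x1 y1 h by auto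
  moreover have "dist (Ds (Dt g) (x2, y2)) B < e" using r2(2)[of "(x2, y2)"] close[of x2 y2] x2 y2 h by auto
  ultimately have "\<bar>Dt (Ds g) (x1, y1) - A\<bar> + \<bar>Dt (Ds g) (x1, y1) - B\<bar> < \<bar>A - B\<bar>"
    using eq unfolding dist_real_def e_def by simp
  moreover have "\<bar>A - B\<bar> \<le> \<bar>Dt (Ds g) (x1, y1) - A\<bar> + \<bar>Dt (Ds g) (x1, y1) - B\<bar>" by arith
  ultimately show False by linarith
qed

lemma quad_deriv:
  fixes f :: "real \<Rightarrow> real"
  assumes "\<And>y. \<bar>f y - f x\<bar> \<le> K * (y - x)\<^sup>2"
  shows "(f has_real_derivative 0) (at x)"
proof -
  have "((\<lambda>y. (f y - f x) / (y - x)) \<longlongrightarrow> 0) (at x)"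
  proof (rule Lim_null_comparison)
    show "\<forall>\<^sub>F y in at x. norm ((f y - f x) / (y - x)) \<le> K * \<bar>y - x\<bar>"
    proof (rule eventuallyI)
      fix y
      show "norm ((f y - f x) / (y - x)) \<le> K * \<bar>y - x\<bar>"
      proof (cases "y = x")
        case True
        then show ?thesis using assms[of x] by simp
      next
        case False
        have sq: "(y - x)\<^sup>2 = \<bar>y - x\<bar> * \<bar>y - x\<bar>" by (metis abs_mult_self_eq power2_eq_square)
        have "\<bar>f y - f x\<bar> \<le> (K * \<bar>y - x\<bar>) * \<bar>y - x\<bar>" using assms[of y] unfolding sq
          by (simp only: mult.assoc)
        moreover have "\<bar>y - x\<bar> > 0" using False by simp
        ultimately have "\<bar>f y - f x\<bar> / \<bar>y - x\<bar> \<le> K * \<bar>y - x\<bar>"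
          by (simp only: pos_divide_le_eq)
        then show ?thesis by (simp only: real_norm_def abs_divide)
      qed
    qed
    have "((\<lambda>y. y - x) \<longlongrightarrow> x - x) (at x)" by (intro tendsto_diff tendsto_ident_at tendsto_const)
    hence "((\<lambda>y. \<bar>y - x\<bar>) \<longlongrightarrow> 0) (at x)" using tendsto_rabs by fastforce
    then show "((\<lambda>y. K * \<bar>y - x\<bar>) \<longlongrightarrow> 0) (at x)"
      using tendsto_mult_right_zero by blast
  qed
  then show ?thesis by (simp add: has_field_derivative_iff)
qed

lemma sq_le_exp: "(u::real) \<ge> 0 \<Longrightarrow> u\<^sup>2 \<le> 4 * exp u"
proof -
  assume u: "u \<ge> 0"
  have "1 + u/2 \<le> exp (u/2)" by (rule exp_ge_add_one_self)
  hence "(1 + u/2)\<^sup>2 \<le> (exp (u/2))\<^sup>2" using u by (intro power_mono) auto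
  also have "(exp (u/2))\<^sup>2 = exp u" by (simp add: power2_eq_square exp_add[symmetric])
  finally have "(1 + u/2)\<^sup>2 \<le> exp u" .
  moreover have "u\<^sup>2 \<le> 4 * (1 + u/2)\<^sup>2" using u by (simp add: power2_eq_square algebra_simps)
  ultimately show ?thesis by linarith
qed

lemma exp_neg_le: "(u::real) > 0 \<Longrightarrow> exp (-u) \<le> 4 / u\<^sup>2"
proof -
  assume u: "u > 0"
  have "u\<^sup>2 \<le> 4 * exp u" using sq_le_exp u by simp
  hence "u\<^sup>2 * exp (-u) \<le> 4" by (simp add: exp_minus field_simps)
  then show ?thesis using u by (simp add: field_simps)
qed

lemma bump_nonneg: "bump x \<ge> 0" by (simp add: bump_def)

definition bumpd :: "real \<Rightarrow> real" where
  "bumpd x = (if \<bar>x\<bar> < 1 then exp (- 1 / (1 - x\<^sup>2)) * (- 2 * x / (1 - x\<^sup>2)\<^sup>2) else 0)"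

lemma bumpd_bound: "\<bar>bumpd x\<bar> \<le> 8"
proof (cases "\<bar>x\<bar> < 1")
  case True
  define u where "u = 1 / (1 - x\<^sup>2)"
  have d: "1 - x\<^sup>2 > 0" using True by (simp add: abs_square_less_1)
  have u: "u > 0" using d by (simp add: u_def)
  have "bumpd x = exp (-u) * (- 2 * x * u\<^sup>2)"
    using True d by (simp add: bumpd_def u_def power_divide)
  hence "\<bar>bumpd x\<bar> = exp (-u) * (2 * \<bar>x\<bar> * u\<^sup>2)"
    by (simp add: abs_mult)
  also have "\<dots> \<le> exp (-u) * (2 * u\<^sup>2)"
  proof -
    have "\<bar>x\<bar> * u\<^sup>2 \<le> 1 * u\<^sup>2" using True by (intro mult_right_mono) auto
    then show ?thesis by (intro mult_left_mono) auto
  qed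
  also have "\<dots> = 2 * (u\<^sup>2 * exp (-u))" by simp
  also have "\<dots> \<le> 2 * 4"
  proof -
    have "u\<^sup>2 \<le> 4 * exp u" using sq_le_exp u by simp
    hence "u\<^sup>2 * exp (-u) \<le> 4" by (simp add: exp_minus field_simps)
    then show ?thesis by (simp add: mult.commute)
  qed
  finally show ?thesis by simp
next
  case False
  then show ?thesis by (simp add: bumpd_def)
qed

lemma bump_deriv: "(bump has_real_derivative bumpd x) (at x)"
proof -
  consider "\<bar>x\<bar> < 1" | "\<bar>x\<bar> > 1" | "\<bar>x\<bar> = 1" by linarith
  then show ?thesis
  proof cases
    case 1
    have d: "1 - x\<^sup>2 \<noteq> 0" using 1 by (metis abs_square_less_1 less_irrefl right_minus_eq)
    have "((\<lambda>x. exp (- 1 / (1 - x\<^sup>2))) has_real_derivative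
        exp (- 1 / (1 - x\<^sup>2)) * (- 2 * x / (1 - x\<^sup>2)\<^sup>2)) (at x)"
      using d by (auto intro!: derivative_eq_intros simp: power2_eq_square field_simps)
    hence "(bump has_real_derivative exp (- 1 / (1 - x\<^sup>2)) * (- 2 * x / (1 - x\<^sup>2)\<^sup>2)) (at x)"
      by (rule has_field_derivative_transform_within_open[where S="{y. \<bar>y\<bar> < 1}"])
        (use 1 in \<open>auto simp: bump_def intro!: open_Collect_less continuous_intros\<close>)
    then show ?thesis using 1 by (simp add: bumpd_def)
  next
    case 2
    have "((\<lambda>x. 0) has_real_derivative 0) (at x)" by simp
    hence "(bump has_real_derivative 0) (at x)"
      by (rule has_field_derivative_transform_within_open[where S="{y. \<bar>y\<bar> > 1}"])
        (use 2 in \<open>auto simp: bump_def intro!: open_Collect_less continuous_intros\<close>)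
    then show ?thesis using 2 by (simp add: bumpd_def)
  next
    case 3
    have "bumpd x = 0" using 3 by (simp add: bumpd_def)
    moreover have "(bump has_real_derivative 0) (at x)"
    proof (rule quad_deriv[where K=16])
      fix y :: real
      show "\<bar>bump y - bump x\<bar> \<le> 16 * (y - x)\<^sup>2"
      proof (cases "\<bar>y\<bar> < 1")
        case True
        have d: "1 - y\<^sup>2 > 0" using True by (simp add: abs_square_less_1)
        define u where "u = 1 / (1 - y\<^sup>2)"
        have u: "u > 0" using d by (simp add: u_def)
        have "bump x = 0" using 3 by (simp add: bump_def)
        moreover have "bump y = exp (-u)" using True by (simp add: bump_def u_def)
        ultimately have "\<bar>bump y - bump x\<bar> = exp (-u)" by simp
        also have "\<dots> \<le> 4 / u\<^sup>2" using exp_neg_le u by blast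
        also have "\<dots> = 4 * (1 - y\<^sup>2)\<^sup>2" using d by (simp add: u_def power_one_over)
        also have "\<dots> \<le> 16 * (y - x)\<^sup>2"
        proof -
          have e: "1 - y\<^sup>2 = (1 - \<bar>y\<bar>) * (1 + \<bar>y\<bar>)" by (simp add: algebra_simps power2_eq_square)
          have a: "0 \<le> 1 - \<bar>y\<bar>" "1 - \<bar>y\<bar> \<le> \<bar>y - x\<bar>" using True 3 by auto
          have "1 - y\<^sup>2 \<le> \<bar>y - x\<bar> * 2" unfolding e using a True
            by (intro mult_mono) auto
          hence "(1 - y\<^sup>2)\<^sup>2 \<le> (2 * \<bar>y - x\<bar>)\<^sup>2" using d by (intro power_mono) auto
          then show ?thesis by (simp add: power_mult_distrib)
        qed
        finally show ?thesis .
      next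
        case False
        then show ?thesis using 3 by (simp add: bump_def)
      qed
    qed
    ultimately show ?thesis by simp
  qed
qed

lemma bump_cont: "continuous_on UNIV bump"
  using bump_deriv DERIV_isCont continuous_at_imp_continuous_on by blast

lemma int_zero_tail:
  fixes f :: "real \<Rightarrow> real"
  assumes "\<And>y. y \<in> {a..b} \<Longrightarrow> f y = 0"
  shows "integral {a..b} f = 0"
proof -
  have "integral {a..b} f = integral {a..b} (\<lambda>_. 0::real)" by (rule integral_cong) (use assms in auto)
  then show ?thesis by simp
qed

lemma int_from_left:
  fixes f :: "real \<Rightarrow> real"
  assumes cont: "continuous_on UNIV f" and z: "\<And>y. y \<le> c \<Longrightarrow> f y = 0" and A: "A \<le> c"
  shows "integral {A..y} f = integral {c..y} f"
proof (cases "c \<le> y")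
  case True
  have "integral {A..c} f + integral {c..y} f = integral {A..y} f"
    by (rule Henstock_Kurzweil_Integration.integral_combine) (use A True in \<open>auto intro!: integrable_continuous_interval continuous_on_subset[OF cont]\<close>)
  moreover have "integral {A..c} f = 0" by (rule int_zero_tail) (use z in auto)
  ultimately show ?thesis by simp
next
  case False
  have "integral {A..y} f = 0" by (rule int_zero_tail) (use z False in auto)
  moreover have "integral {c..y} f = 0" using False by simp
  ultimately show ?thesis by simp
qed

lemma prim_deriv:
  fixes f :: "real \<Rightarrow> real"
  assumes cont: "continuous_on UNIV f" and z: "\<And>y. y \<le> c \<Longrightarrow> f y = 0"
  shows "((\<lambda>y. integral {c..y} f) has_real_derivative f x) (at x)"
proof -
  define A where "A = min c x - 1"
  define B where "B = x + 1"
  have AB: "A < x" "x < B" "A \<le> c" by (auto simp: A_def B_def)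
  have "((\<lambda>y. integral {A..y} f) has_real_derivative f x) (at x within {A..B})"
    by (rule integral_has_real_derivative) (use AB in \<open>auto intro: continuous_on_subset[OF cont]\<close>)
  hence "((\<lambda>y. integral {A..y} f) has_real_derivative f x) (at x)"
    using at_within_Icc_at[OF AB(1,2)] by simp
  then show ?thesis
    by (rule has_field_derivative_transform_within_open[where S="{A<..}"])
       (use AB int_from_left[OF cont z AB(3)] in auto)
qed

definition Rf :: "(real \<Rightarrow> real) \<Rightarrow> real \<Rightarrow> real \<Rightarrow> real" where
  "Rf \<rho> e z = integral {-e..z} \<rho>"
definition Pf :: "(real \<Rightarrow> real) \<Rightarrow> real \<Rightarrow> real \<Rightarrow> real" where
  "Pf \<rho> e z = integral {-e..z} (\<lambda>y. y * \<rho> y)"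
definition Kf :: "(real \<Rightarrow> real) \<Rightarrow> real \<Rightarrow> real \<Rightarrow> real" where
  "Kf \<rho> e z = 2 * (z * Rf \<rho> e z - Pf \<rho> e z) + Pf \<rho> e e - z * Rf \<rho> e e"

context
  fixes \<rho> :: "real \<Rightarrow> real" and e :: real
  assumes e: "e > 0" and cont: "continuous_on UNIV \<rho>" and supp: "\<And>y. e \<le> \<bar>y\<bar> \<Longrightarrow> \<rho> y = 0"
begin

lemma cont_y: "continuous_on UNIV (\<lambda>y. y * \<rho> y)"
  by (intro continuous_intros cont)

lemma intg: "continuous_on UNIV (g :: real \<Rightarrow> real) \<Longrightarrow> g integrable_on {a..b}"
  by (rule integrable_continuous_interval) (auto intro: continuous_on_subset)

lemma Rf_deriv: "(Rf \<rho> e has_real_derivative \<rho> x) (at x)"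
  unfolding Rf_def[abs_def] by (rule prim_deriv[OF cont]) (use supp in auto)

lemma Pf_deriv: "(Pf \<rho> e has_real_derivative x * \<rho> x) (at x)"
  unfolding Pf_def[abs_def] by (rule prim_deriv[OF cont_y]) (use supp in auto)

lemma Rf_right: "e \<le> z \<Longrightarrow> Rf \<rho> e z = Rf \<rho> e e"
proof -
  assume z: "e \<le> z"
  have "integral {-e..e} \<rho> + integral {e..z} \<rho> = integral {-e..z} \<rho>"
    by (rule Henstock_Kurzweil_Integration.integral_combine) (use z e in \<open>auto intro!: intg cont\<close>)
  moreover have "integral {e..z} \<rho> = 0" by (rule int_zero_tail) (use supp e in auto)
  ultimately show ?thesis by (simp add: Rf_def)
qed

lemma Pf_right: "e \<le> z \<Longrightarrow> Pf \<rho> e z = Pf \<rho> e e"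
proof -
  assume z: "e \<le> z"
  have "integral {-e..e} (\<lambda>y. y * \<rho> y) + integral {e..z} (\<lambda>y. y * \<rho> y) = integral {-e..z} (\<lambda>y. y * \<rho> y)"
    by (rule Henstock_Kurzweil_Integration.integral_combine) (use z e in \<open>auto intro!: intg cont_y\<close>)
  moreover have "integral {e..z} (\<lambda>y. y * \<rho> y) = 0" by (rule int_zero_tail) (use supp e in auto)
  ultimately show ?thesis by (simp add: Pf_def)
qed

lemma Rf_left: "z \<le> -e \<Longrightarrow> Rf \<rho> e z = 0"
  unfolding Rf_def by (rule int_zero_tail) (use supp in auto)
lemma Pf_left: "z \<le> -e \<Longrightarrow> Pf \<rho> e z = 0"
  unfolding Pf_def by (rule int_zero_tail) (use supp in auto)

lemma int_lin: "integral {a..b} (\<lambda>y. (z - y) * \<rho> y) = z * integral {a..b} \<rho> - integral {a..b} (\<lambda>y. y * \<rho> y)"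
proof -
  have "integral {a..b} (\<lambda>y. z * \<rho> y - y * \<rho> y) = integral {a..b} (\<lambda>y. z * \<rho> y) - integral {a..b} (\<lambda>y. y * \<rho> y)"
    by (rule integral_diff) (auto intro!: intg cont cont_y continuous_intros)
  moreover have "integral {a..b} (\<lambda>y. z * \<rho> y) = z * integral {a..b} \<rho>" by simp
  ultimately show ?thesis by (simp add: algebra_simps)
qed

lemma K_formula: "integral {-e..e} (\<lambda>y. \<bar>z - y\<bar> * \<rho> y) = Kf \<rho> e z"
proof -
  consider "z \<le> -e" | "e \<le> z" | "-e < z \<and> z < e" by linarith
  then show ?thesis
  proof cases
    case 1
    have "integral {-e..e} (\<lambda>y. \<bar>z - y\<bar> * \<rho> y) = integral {-e..e} (\<lambda>y. -((z - y) * \<rho> y))"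
      by (rule integral_cong) (use 1 in \<open>auto simp: algebra_simps\<close>)
    also have "\<dots> = -(z * Rf \<rho> e e - Pf \<rho> e e)" by (simp only: integral_neg int_lin Rf_def Pf_def)
    finally show ?thesis using 1 by (simp add: Kf_def Rf_left Pf_left)
  next
    case 2
    have "integral {-e..e} (\<lambda>y. \<bar>z - y\<bar> * \<rho> y) = integral {-e..e} (\<lambda>y. (z - y) * \<rho> y)"
      by (rule integral_cong) (use 2 in auto)
    also have "\<dots> = z * Rf \<rho> e e - Pf \<rho> e e" by (simp only: int_lin Rf_def Pf_def)
    finally show ?thesis using Rf_right[OF 2] Pf_right[OF 2] by (simp add: Kf_def algebra_simps)
  next
    case 3
    have ig: "(\<lambda>y. \<bar>z - y\<bar> * \<rho> y) integrable_on {-e..e}" by (auto intro!: intg cont continuous_intros)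
    have c0: "integral {-e..z} (\<lambda>y. \<bar>z - y\<bar> * \<rho> y) + integral {z..e} (\<lambda>y. \<bar>z - y\<bar> * \<rho> y)
        = integral {-e..e} (\<lambda>y. \<bar>z - y\<bar> * \<rho> y)"
      by (rule Henstock_Kurzweil_Integration.integral_combine) (use 3 ig in auto)
    have "integral {-e..z} (\<lambda>y. \<bar>z - y\<bar> * \<rho> y) = integral {-e..z} (\<lambda>y. (z - y) * \<rho> y)"
      by (rule integral_cong) auto
    also have "\<dots> = z * integral {-e..z} \<rho> - integral {-e..z} (\<lambda>y. y * \<rho> y)" by (rule int_lin)
    finally have i1: "integral {-e..z} (\<lambda>y. \<bar>z - y\<bar> * \<rho> y) = z * integral {-e..z} \<rho> - integral {-e..z} (\<lambda>y. y * \<rho> y)" .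
    have "integral {z..e} (\<lambda>y. \<bar>z - y\<bar> * \<rho> y) = integral {z..e} (\<lambda>y. -((z - y) * \<rho> y))"
      by (rule integral_cong) (auto simp: algebra_simps)
    also have "\<dots> = -(z * integral {z..e} \<rho> - integral {z..e} (\<lambda>y. y * \<rho> y))"
      by (simp only: integral_neg int_lin)
    finally have i2: "integral {z..e} (\<lambda>y. \<bar>z - y\<bar> * \<rho> y) = -(z * integral {z..e} \<rho> - integral {z..e} (\<lambda>y. y * \<rho> y))" .
    have c1: "integral {-e..z} \<rho> + integral {z..e} \<rho> = integral {-e..e} \<rho>"
      by (rule Henstock_Kurzweil_Integration.integral_combine) (use 3 in \<open>auto intro!: intg cont\<close>)
    have c2: "integral {-e..z} (\<lambda>y. y * \<rho> y) + integral {z..e} (\<lambda>y. y * \<rho> y) = integral {-e..e} (\<lambda>y. y * \<rho> y)"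
      by (rule Henstock_Kurzweil_Integration.integral_combine) (use 3 in \<open>auto intro!: intg cont_y\<close>)
    have c3: "z * integral {z..e} \<rho> = z * integral {-e..e} \<rho> - z * integral {-e..z} \<rho>"
      using arg_cong[OF c1, of "\<lambda>u. z * u"] by (simp only: distrib_left)
    have aux: "C = 2 * (zR1 - P1) + Pe - zRe" if "A + B = C" "A = zR1 - P1" "B = -(zR2 - P2)"
      "P1 + P2 = Pe" "zR2 = zRe - zR1" for A B C P1 P2 Pe zR2 zRe zR1 :: real
      using that by (simp add: algebra_simps)
    show ?thesis unfolding Kf_def Rf_def Pf_def by (rule aux[OF c0 i1 i2 c2 c3])
  qed
qed

lemma Kf_deriv: "(Kf \<rho> e has_real_derivative (2 * Rf \<rho> e z - Rf \<rho> e e)) (at z)"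
  unfolding Kf_def[abs_def]
  by (auto intro!: derivative_eq_intros Rf_deriv Pf_deriv simp: algebra_simps)

lemma Jconv_formula:
  "integral UNIV (\<lambda>y. J (x - y) * \<rho> y) =
     pi / 4 * (Kf \<rho> e (x - 3*pi/4) + Kf \<rho> e (x - pi/4) + Kf \<rho> e (x + pi/4) + Kf \<rho> e (x + 3*pi/4))"
proof -
  have "integral UNIV (\<lambda>y. J (x - y) * \<rho> y) = integral UNIV (\<lambda>y. if y \<in> {-e..e} then J (x - y) * \<rho> y else 0)"
  proof (rule arg_cong[where f="integral UNIV"], rule ext)
    fix y
    show "J (x - y) * \<rho> y = (if y \<in> {-e..e} then J (x - y) * \<rho> y else 0)"
    proof (cases "y \<in> {-e..e}")
      case False
      hence "e \<le> \<bar>y\<bar>" by auto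
      then show ?thesis using False supp by simp
    qed simp
  qed
  also have "\<dots> = integral {-e..e} (\<lambda>y. J (x - y) * \<rho> y)" by (rule integral_restrict_UNIV)
  also have "\<dots> = integral {-e..e} (\<lambda>y. pi / 4 * (\<bar>(x - 3*pi/4) - y\<bar> * \<rho> y + \<bar>(x - pi/4) - y\<bar> * \<rho> y
        + \<bar>(x + pi/4) - y\<bar> * \<rho> y + \<bar>(x + 3*pi/4) - y\<bar> * \<rho> y))"
    by (rule integral_cong) (simp add: J_def algebra_simps)
  also have "\<dots> = pi / 4 * (integral {-e..e} (\<lambda>y. \<bar>(x - 3*pi/4) - y\<bar> * \<rho> y) + integral {-e..e} (\<lambda>y. \<bar>(x - pi/4) - y\<bar> * \<rho> y)
        + integral {-e..e} (\<lambda>y. \<bar>(x + pi/4) - y\<bar> * \<rho> y) + integral {-e..e} (\<lambda>y. \<bar>(x + 3*pi/4) - y\<bar> * \<rho> y))"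
    by (simp add: integral_add intg cont continuous_intros)
  finally show ?thesis by (simp only: K_formula)
qed

end

lemma Z_nonneg: "integral {-1..1} bump \<ge> 0"
  by (rule integral_nonneg) (auto intro!: integrable_continuous_interval continuous_on_subset[OF bump_cont] bump_nonneg)

lemma moll_eq: "mollifier_eps e x = bump (x / e) * (1 / integral {-1..1} bump / e)"
  by (simp add: mollifier_eps_def mollifier_def)

lemma moll_deriv:
  assumes e: "e > 0"
  shows "(mollifier_eps e has_real_derivative bumpd (x / e) * (1 / e) * (1 / integral {-1..1} bump / e)) (at x)"
proof -
  have "((\<lambda>x. bump (x / e)) has_real_derivative bumpd (x / e) * (1 / e)) (at x)"
  proof -
    have "((\<lambda>x. x / e) has_real_derivative 1 / e) (at x)" using e by (auto intro!: derivative_eq_intros)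
    from DERIV_chain2[OF bump_deriv this] show ?thesis .
  qed
  hence "((\<lambda>x. bump (x / e) * (1 / integral {-1..1} bump / e)) has_real_derivative
      bumpd (x / e) * (1 / e) * (1 / integral {-1..1} bump / e)) (at x)"
    by (rule DERIV_cmult_right)
  then show ?thesis by (simp add: moll_eq[abs_def])
qed

lemma moll_dbound:
  assumes e: "e > 0"
  shows "\<bar>bumpd (x / e) * (1 / e) * (1 / integral {-1..1} bump / e)\<bar> \<le> 8 * (1 / e) * \<bar>1 / integral {-1..1} bump / e\<bar>"
  unfolding abs_mult using e bumpd_bound[of "x/e"] by (intro mult_right_mono) (auto simp: divide_right_mono)

lemma moll_nonneg: "e > 0 \<Longrightarrow> mollifier_eps e x \<ge> 0"
  using Z_nonneg[of] bump_nonneg[of "x/e"] by (simp add: moll_eq)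

lemma moll_supp: "e > 0 \<Longrightarrow> e \<le> \<bar>y\<bar> \<Longrightarrow> mollifier_eps e y = 0"
proof -
  assume e: "e > 0" and y: "e \<le> \<bar>y\<bar>"
  have "\<bar>y / e\<bar> \<ge> 1" using e y by (simp add: abs_divide)
  then show ?thesis by (simp add: moll_eq bump_def)
qed

lemma moll_cont: "e > 0 \<Longrightarrow> continuous_on UNIV (mollifier_eps e)"
proof -
  assume e: "e > 0"
  have "\<And>x. isCont (mollifier_eps e) x" using moll_deriv[OF e] by (rule DERIV_isCont)
  then show ?thesis by (simp add: continuous_at_imp_continuous_on)
qed

lemma Jeps_smooth:
  assumes e: "e > 0"
  shows "\<exists>a c c' L. (\<forall>x. (Jeps e has_real_derivative a x) (at x)) \<and> (\<forall>x. (a has_real_derivative c x) (at x))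
    \<and> (\<forall>x. (c has_real_derivative c' x) (at x)) \<and> (\<forall>x. e\<^sup>2 \<le> c x) \<and> (\<forall>x. \<bar>c' x\<bar> \<le> L)"
proof -
  define \<rho> where "\<rho> = mollifier_eps e"
  define \<rho>' where "\<rho>' = (\<lambda>x. bumpd (x / e) * (1 / e) * (1 / integral {-1..1} bump / e))"
  define L0 where "L0 = 8 * (1 / e) * \<bar>1 / integral {-1..1} bump / e\<bar>"
  have cont: "continuous_on UNIV \<rho>" using moll_cont e by (simp add: \<rho>_def)
  have supp: "\<And>y. e \<le> \<bar>y\<bar> \<Longrightarrow> \<rho> y = 0" using moll_supp e by (simp add: \<rho>_def)
  have rd: "\<And>x. (\<rho> has_real_derivative \<rho>' x) (at x)" using moll_deriv e by (simp add: \<rho>_def \<rho>'_def)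
  have rb: "\<And>x. \<bar>\<rho>' x\<bar> \<le> L0" using moll_dbound e by (simp add: \<rho>'_def L0_def)
  have rn: "\<And>x. \<rho> x \<ge> 0" using moll_nonneg e by (simp add: \<rho>_def)
  note Kd = Kf_deriv[OF e cont supp]
  note Rd = Rf_deriv[OF e cont supp]
  define a where "a = (\<lambda>x. pi / 4 * ((2 * Rf \<rho> e (x - 3*pi/4) - Rf \<rho> e e) + (2 * Rf \<rho> e (x - pi/4) - Rf \<rho> e e)
     + (2 * Rf \<rho> e (x + pi/4) - Rf \<rho> e e) + (2 * Rf \<rho> e (x + 3*pi/4) - Rf \<rho> e e)) + e\<^sup>2 * x)"
  define c where "c = (\<lambda>x. pi / 4 * (2 * \<rho> (x - 3*pi/4) + 2 * \<rho> (x - pi/4) + 2 * \<rho> (x + pi/4) + 2 * \<rho> (x + 3*pi/4)) + e\<^sup>2)"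
  define c' where "c' = (\<lambda>x. pi / 4 * (2 * \<rho>' (x - 3*pi/4) + 2 * \<rho>' (x - pi/4) + 2 * \<rho>' (x + pi/4) + 2 * \<rho>' (x + 3*pi/4)))"
  have Jf: "Jeps e = (\<lambda>x. pi / 4 * (Kf \<rho> e (x - 3*pi/4) + Kf \<rho> e (x - pi/4) + Kf \<rho> e (x + pi/4) + Kf \<rho> e (x + 3*pi/4)) + e\<^sup>2 / 2 * x\<^sup>2)"
  proof (rule ext)
    fix x
    show "Jeps e x = pi / 4 * (Kf \<rho> e (x - 3*pi/4) + Kf \<rho> e (x - pi/4) + Kf \<rho> e (x + pi/4) + Kf \<rho> e (x + 3*pi/4)) + e\<^sup>2 / 2 * x\<^sup>2"
      using Jconv_formula[OF e cont supp, of x] by (simp add: Jeps_def \<rho>_def)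
  qed
  have d1: "(Jeps e has_real_derivative a x) (at x)" for x
    unfolding Jf a_def
    by (auto intro!: derivative_eq_intros DERIV_chain2[OF Kd] simp: power2_eq_square)
  have d2: "(a has_real_derivative c x) (at x)" for x
    unfolding a_def c_def
    by (auto intro!: derivative_eq_intros DERIV_chain2[OF Rd])
  have d3: "(c has_real_derivative c' x) (at x)" for x
    unfolding c_def c'_def
    by (auto intro!: derivative_eq_intros DERIV_chain2[OF rd])
  have cb: "e\<^sup>2 \<le> c x" for x
    unfolding c_def using rn[of "x - 3*pi/4"] rn[of "x - pi/4"] rn[of "x + pi/4"] rn[of "x + 3*pi/4"]
    by simp
  have c'b: "\<bar>c' x\<bar> \<le> 2 * pi * L0" for x
  proof -
    have "\<bar>c' x\<bar> \<le> pi / 4 * (2 * \<bar>\<rho>' (x - 3*pi/4)\<bar> + 2 * \<bar>\<rho>' (x - pi/4)\<bar> + 2 * \<bar>\<rho>' (x + pi/4)\<bar> + 2 * \<bar>\<rho>' (x + 3*pi/4)\<bar>)"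
      unfolding c'_def by (simp add: abs_mult)
    also have "\<dots> \<le> pi / 4 * (2 * L0 + 2 * L0 + 2 * L0 + 2 * L0)"
      using rb[of "x - 3*pi/4"] rb[of "x - pi/4"] rb[of "x + pi/4"] rb[of "x + 3*pi/4"]
      by (intro mult_left_mono) auto
    finally show ?thesis by (simp add: mult.commute mult.left_commute)
  qed
  show ?thesis using d1 d2 d3 cb c'b by blast
qed

locale sol =
  fixes lam :: "real \<Rightarrow> real \<Rightarrow> real" and F :: "(real \<times> real \<Rightarrow> real) set"
    and A C C' :: "real \<Rightarrow> real" and e Lc :: real
  assumes e: "e > 0"
    and F0: "(\<lambda>z. lam (fst z) (snd z)) \<in> F"
    and Fd: "\<And>g. g \<in> F \<Longrightarrow> g differentiable_on UNIV"
    and FDs: "\<And>g. g \<in> F \<Longrightarrow> Ds g \<in> F"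
    and FDt: "\<And>g. g \<in> F \<Longrightarrow> Dt g \<in> F"
    and per: "\<And>s t. t \<ge> 0 \<Longrightarrow> lam (s + 2*pi) t = lam s t"
    and pde: "\<And>s t. t > 0 \<Longrightarrow> deriv (\<lambda>\<tau>. lam s \<tau>) t = deriv (\<lambda>\<sigma>. A (deriv (\<lambda>r. lam r t) \<sigma> + \<sigma>)) s"
    and dA: "\<And>x. (A has_real_derivative C x) (at x)"
    and dC: "\<And>x. (C has_real_derivative C' x) (at x)"
    and Cb: "\<And>x. e\<^sup>2 \<le> C x"
    and C'b: "\<And>x. \<bar>C' x\<bar> \<le> Lc"
begin

definition "g0 = (\<lambda>z. lam (fst z) (snd z))"
definition "p = Ds g0"
definition "q = Ds p"
definition "v = Dt g0"

lemma inF: "g0 \<in> F" "p \<in> F" "q \<in> F" "v \<in> F" "Ds v \<in> F" "Ds q \<in> F" "Dt q \<in> F" "Ds (Ds v) \<in> F"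
  using F0 FDs FDt by (auto simp: g0_def p_def q_def v_def)

lemma diffF: "g \<in> F \<Longrightarrow> g differentiable (at z)"
  using Fd[of g] by (cases z) (auto simp: differentiable_on_def)

lemma contF: "g \<in> F \<Longrightarrow> continuous_on UNIV g"
  using Fd differentiable_imp_continuous_on by blast

lemma contF_at: "g \<in> F \<Longrightarrow> isCont g z"
  using contF[of g] by (cases z) (simp add: continuous_on_eq_continuous_at)

lemma DsF: "g \<in> F \<Longrightarrow> ((\<lambda>r. g (r, t)) has_real_derivative Ds g (s, t)) (at s)"
  by (rule Ds_deriv[OF diffF])

lemma DtF: "g \<in> F \<Longrightarrow> ((\<lambda>r. g (s, r)) has_real_derivative Dt g (s, t)) (at t)"
  by (rule Dt_deriv[OF diffF])

lemma schwarzF: "g \<in> F \<Longrightarrow> Dt (Ds g) = Ds (Dt g)"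
  by (rule ext, rule schwarz) (auto intro: diffF contF FDs FDt)

lemma f1: "deriv (\<lambda>r. lam r t) s = p (s, t)"
  using DsF[OF inF(1), of t s] by (simp add: p_def g0_def DERIV_imp_deriv)

lemma f1': "(\<lambda>r. deriv (\<lambda>q. lam q t) r + r) = (\<lambda>r. p (r, t) + r)"
  by (simp add: f1)

lemma f2: "((\<lambda>r. p (r, t) + r) has_real_derivative q (s, t) + 1) (at s)"
  using DsF[OF inF(2), of t s] by (auto intro!: derivative_eq_intros simp: q_def)

lemma f2': "deriv (\<lambda>r. deriv (\<lambda>q. lam q t) r + r) s = q (s, t) + 1"
  unfolding f1' using f2 by (rule DERIV_imp_deriv)

lemma f3: "deriv (\<lambda>\<tau>. lam s \<tau>) t = v (s, t)"
  using DtF[OF inF(1), of s t] by (simp add: v_def g0_def DERIV_imp_deriv)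

lemma f4_deriv: "((\<lambda>\<sigma>. A (p (\<sigma>, t) + \<sigma>)) has_real_derivative C (p (s, t) + s) * (q (s, t) + 1)) (at s)"
  using DERIV_chain2[OF dA f2] .

lemma f4: "t > 0 \<Longrightarrow> v (s, t) = C (p (s, t) + s) * (q (s, t) + 1)"
proof -
  assume t: "t > 0"
  have "v (s, t) = deriv (\<lambda>\<sigma>. A (deriv (\<lambda>r. lam r t) \<sigma> + \<sigma>)) s" using pde[OF t] f3 by simp
  also have "\<dots> = deriv (\<lambda>\<sigma>. A (p (\<sigma>, t) + \<sigma>)) s" by (simp add: f1)
  also have "\<dots> = C (p (s, t) + s) * (q (s, t) + 1)" using f4_deriv by (rule DERIV_imp_deriv)
  finally show ?thesis .
qed

lemma f5: "t > 0 \<Longrightarrow> Ds v (s, t) = C' (p (s, t) + s) * (q (s, t) + 1) * (q (s, t) + 1) + C (p (s, t) + s) * Ds q (s, t)"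
proof -
  assume t: "t > 0"
  have h: "(\<lambda>r. v (r, t)) = (\<lambda>r. C (p (r, t) + r) * (q (r, t) + 1))" using f4[OF t] by auto
  have d1: "((\<lambda>r. C (p (r, t) + r)) has_real_derivative C' (p (s, t) + s) * (q (s, t) + 1)) (at s)"
    using DERIV_chain2[OF dC f2] .
  have d2: "((\<lambda>r. q (r, t) + 1) has_real_derivative Ds q (s, t)) (at s)"
    using DsF[OF inF(3), of t s] by (auto intro!: derivative_eq_intros)
  have "((\<lambda>r. v (r, t)) has_real_derivative C' (p (s, t) + s) * (q (s, t) + 1) * (q (s, t) + 1) + C (p (s, t) + s) * Ds q (s, t)) (at s)"
    unfolding h using DERIV_mult[OF d1 d2] by (simp add: algebra_simps)
  moreover have "((\<lambda>r. v (r, t)) has_real_derivative Ds v (s, t)) (at s)" by (rule DsF[OF inF(4)])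
  ultimately show ?thesis using DERIV_unique by blast
qed

lemma f6: "Dt q = Ds (Ds v)"
proof -
  have "Dt q = Ds (Dt p)" unfolding q_def by (rule schwarzF[OF inF(2)])
  also have "Dt p = Ds v" unfolding p_def v_def by (rule schwarzF[OF inF(1)])
  finally show ?thesis .
qed

lemma per_Ds:
  assumes h: "h \<in> F" and hp: "\<And>r. h (r + 2*pi, t) = h (r, t)"
  shows "Ds h (s + 2*pi, t) = Ds h (s, t)"
proof -
  have "((\<lambda>r. h (r + 2*pi, t)) has_real_derivative Ds h (s + 2*pi, t) * 1) (at s)"
  proof -
    have sh: "((\<lambda>r. r + 2*pi) has_real_derivative 1) (at s)" by (auto intro!: derivative_eq_intros)
    show ?thesis using DERIV_chain2[where f="\<lambda>r. h (r, t)" and g="\<lambda>r. r + 2*pi", OF DsF[OF h, of t "s + 2*pi"] sh]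
      by simp
  qed
  hence "((\<lambda>r. h (r, t)) has_real_derivative Ds h (s + 2*pi, t)) (at s)" using hp by simp
  then show ?thesis using DsF[OF h, of t s] DERIV_unique by blast
qed

lemma per_p: "t \<ge> 0 \<Longrightarrow> p (s + 2*pi, t) = p (s, t)"
  unfolding p_def by (rule per_Ds[OF inF(1)]) (simp add: g0_def per)

lemma per_q: "t \<ge> 0 \<Longrightarrow> q (s + 2*pi, t) = q (s, t)"
  unfolding q_def by (rule per_Ds[OF inF(2)]) (simp add: per_p)

lemma per_v: "t > 0 \<Longrightarrow> v (s + 2*pi, t) = v (s, t)"
proof -
  assume t: "t > 0"
  have "((\<lambda>r. g0 (s, r)) has_real_derivative Dt g0 (s + 2*pi, t)) (at t)"
    by (rule has_field_derivative_transform_within_open[OF DtF[OF inF(1), of "s + 2*pi" t], where S="{0<..}"])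
       (use t in \<open>auto simp: g0_def per\<close>)
  then show ?thesis using DtF[OF inF(1), of s t] DERIV_unique unfolding v_def by blast
qed

lemma per_Dsv: "t > 0 \<Longrightarrow> Ds v (s + 2*pi, t) = Ds v (s, t)"
  by (rule per_Ds[OF inF(4)]) (simp add: per_v)

end

lemma eta_pos: "d > 0 \<Longrightarrow> sqrt (x\<^sup>2 + d\<^sup>2) > (0::real)"
  by (simp add: add_nonneg_pos)

lemma eta_sq: "sqrt (x\<^sup>2 + d\<^sup>2) ^ 2 = x\<^sup>2 + (d::real)\<^sup>2"
  by simp

lemma eta_d1:
  fixes d :: real assumes d: "d > 0"
  shows "((\<lambda>u. sqrt (u\<^sup>2 + d\<^sup>2)) has_real_derivative x / sqrt (x\<^sup>2 + d\<^sup>2)) (at x)"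
proof -
  have p: "x\<^sup>2 + d\<^sup>2 > 0" using d by (simp add: add_nonneg_pos)
  show ?thesis using p
    by (auto intro!: derivative_eq_intros simp: field_simps)
qed

lemma eta_d2:
  fixes d :: real assumes d: "d > 0"
  shows "((\<lambda>u. u / sqrt (u\<^sup>2 + d\<^sup>2)) has_real_derivative d\<^sup>2 / sqrt (x\<^sup>2 + d\<^sup>2) ^ 3) (at x)"
proof -
  define S where "S = sqrt (x\<^sup>2 + d\<^sup>2)"
  have S: "S > 0" using eta_pos[OF d] by (simp add: S_def)
  have S2: "S * S = x\<^sup>2 + d\<^sup>2" using eta_sq[of x d] by (simp add: S_def power2_eq_square)
  have "((\<lambda>u. u / sqrt (u\<^sup>2 + d\<^sup>2)) has_real_derivative (1 * S - x * (x / S)) / (S * S)) (at x)"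
  proof -
    have "sqrt (x\<^sup>2 + d\<^sup>2) \<noteq> 0" using S d unfolding S_def by linarith
    from DERIV_divide[OF DERIV_ident eta_d1[OF d, of x] this] show ?thesis by (simp add: S_def)
  qed
  moreover have "(1 * S - x * (x / S)) / (S * S) = d\<^sup>2 / S ^ 3"
  proof -
    have "(1 * S - x * (x / S)) = (S * S - x * x) / S" using S by (simp add: field_simps)
    also have "\<dots> = d\<^sup>2 / S" using S2 by (simp add: power2_eq_square)
    finally show ?thesis using S by (simp add: field_simps power3_eq_cube)
  qed
  ultimately show ?thesis by (simp add: S_def)
qed

lemma pw_bound:
  fixes x y c d e L dl :: real
  assumes c: "e\<^sup>2 \<le> c" and e: "e > 0" and dL: "\<bar>d\<bar> \<le> L" and dl: "dl > 0"
  shows "- ((d * x * x + c * y) * (dl\<^sup>2 / sqrt (x\<^sup>2 + dl\<^sup>2) ^ 3 * y)) \<le> dl\<^sup>2 * L\<^sup>2 * sqrt (x\<^sup>2 + dl\<^sup>2) / (4 * e\<^sup>2)"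
proof -
  define S where "S = sqrt (x\<^sup>2 + dl\<^sup>2)"
  have S: "S > 0" using eta_pos[OF dl] by (simp add: S_def)
  have S2: "S\<^sup>2 = x\<^sup>2 + dl\<^sup>2" by (simp add: S_def)
  define k where "k = dl\<^sup>2 / S ^ 3"
  have k: "k \<ge> 0" using S by (simp add: k_def)
  have e2: "e\<^sup>2 > 0" using e by simp
  have cp: "c > 0" using c e2 by linarith
  have q1: "- (d * x * x * y + c * y * y) \<le> d\<^sup>2 * (x\<^sup>2)\<^sup>2 / (4 * c)"
  proof -
    have "0 \<le> (c * y + d * x * x / 2)\<^sup>2" by simp
    hence "0 \<le> c * (c * y * y + d * x * x * y) + d\<^sup>2 * (x\<^sup>2)\<^sup>2 / 4"
      by (simp add: power2_eq_square algebra_simps)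
    hence "- (c * (d * x * x * y + c * y * y)) \<le> d\<^sup>2 * (x\<^sup>2)\<^sup>2 / 4" by (simp add: algebra_simps)
    then show ?thesis using cp by (simp add: field_simps)
  qed
  have q2: "d\<^sup>2 * (x\<^sup>2)\<^sup>2 / (4 * c) \<le> L\<^sup>2 * (S\<^sup>2)\<^sup>2 / (4 * e\<^sup>2)"
  proof -
    have "\<bar>d\<bar> \<le> \<bar>L\<bar>" using dL by linarith
    hence a: "d\<^sup>2 \<le> L\<^sup>2" using abs_le_square_iff by blast
    have b: "(x\<^sup>2)\<^sup>2 \<le> (S\<^sup>2)\<^sup>2" unfolding S2 using dl by (intro power_mono) auto
    have "d\<^sup>2 * (x\<^sup>2)\<^sup>2 \<le> L\<^sup>2 * (S\<^sup>2)\<^sup>2" using a b by (intro mult_mono) auto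
    moreover have "4 * e\<^sup>2 \<le> 4 * c" using c by simp
    ultimately show ?thesis using e2 by (intro frac_le) auto
  qed
  have "- ((d * x * x + c * y) * (k * y)) = k * (- (d * x * x * y + c * y * y))" by (simp add: algebra_simps)
  also have "\<dots> \<le> k * (L\<^sup>2 * (S\<^sup>2)\<^sup>2 / (4 * e\<^sup>2))" using q1 q2 k by (intro mult_left_mono) auto
  also have "\<dots> = dl\<^sup>2 * L\<^sup>2 * S / (4 * e\<^sup>2)" using S by (simp add: k_def field_simps power2_eq_square power3_eq_cube)
  finally show ?thesis by (simp add: k_def S_def)
qed

lemma eta_le: "d > 0 \<Longrightarrow> sqrt (x\<^sup>2 + d\<^sup>2) \<le> \<bar>x\<bar> + (d::real)"
  by (rule real_le_lsqrt) (auto simp: power2_eq_square algebra_simps)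

lemma eta_ge: "\<bar>x\<bar> \<le> sqrt (x\<^sup>2 + (d::real)\<^sup>2)"
  by (rule real_sqrt_ge_abs1)

context sol begin

definition "Wd = (\<lambda>z. q z + 1)"
definition "Fe dl \<tau> = integral {0..2*pi} (\<lambda>s. sqrt ((q (s, \<tau>) + 1)\<^sup>2 + dl\<^sup>2))"

lemma cont_swap: "g \<in> F \<Longrightarrow> continuous_on UNIV (\<lambda>x::real\<times>real. g (snd x, fst x))"
  by (rule continuous_on_compose2[OF contF]) (auto intro!: continuous_intros)

lemma cont_slice: "g \<in> F \<Longrightarrow> continuous_on S (\<lambda>s. g (s, t))"
  by (rule continuous_on_compose2[OF contF]) (auto intro!: continuous_intros)

lemma Fe_deriv:
  assumes dl: "dl > 0"
  shows "(Fe dl has_real_derivative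
     integral {0..2*pi} (\<lambda>s. (q (s, \<tau>) + 1) / sqrt ((q (s, \<tau>) + 1)\<^sup>2 + dl\<^sup>2) * Dt q (s, \<tau>))) (at \<tau>)"
proof -
  have "((\<lambda>x. integral (cbox 0 (2*pi)) (\<lambda>s. sqrt ((q (s, x) + 1)\<^sup>2 + dl\<^sup>2))) has_field_derivative
     integral (cbox 0 (2*pi)) (\<lambda>s. (q (s, \<tau>) + 1) / sqrt ((q (s, \<tau>) + 1)\<^sup>2 + dl\<^sup>2) * Dt q (s, \<tau>))) (at \<tau> within UNIV)"
  proof (rule leibniz_rule_field_derivative)
    fix x :: real and s :: real
    have d: "((\<lambda>x. q (s, x) + 1) has_real_derivative Dt q (s, x)) (at x)"
      using DtF[OF inF(3), of s x] by (auto intro!: derivative_eq_intros)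
    show "((\<lambda>x. sqrt ((q (s, x) + 1)\<^sup>2 + dl\<^sup>2)) has_field_derivative
        (q (s, x) + 1) / sqrt ((q (s, x) + 1)\<^sup>2 + dl\<^sup>2) * Dt q (s, x)) (at x within UNIV)"
      using DERIV_chain2[OF eta_d1[OF dl] d] by simp
  next
    fix x :: real
    show "(\<lambda>s. sqrt ((q (s, x) + 1)\<^sup>2 + dl\<^sup>2)) integrable_on cbox 0 (2*pi)"
      unfolding box_real
    proof (rule integrable_continuous_interval)
      have "continuous_on {0..2*pi} (\<lambda>s. q (s, x))" by (rule cont_slice[OF inF(3)])
      then show "continuous_on {0..2*pi} (\<lambda>s. sqrt ((q (s, x) + 1)\<^sup>2 + dl\<^sup>2))"
        by (intro continuous_intros)
    qed
  next
    have c1: "continuous_on UNIV (\<lambda>x::real\<times>real. q (snd x, fst x))" by (rule cont_swap[OF inF(3)])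
    have c2: "continuous_on UNIV (\<lambda>x::real\<times>real. Dt q (snd x, fst x))" by (rule cont_swap[OF inF(7)])
    have "continuous_on UNIV (\<lambda>x::real\<times>real. (q (snd x, fst x) + 1) / sqrt ((q (snd x, fst x) + 1)\<^sup>2 + dl\<^sup>2) * Dt q (snd x, fst x))"
      using dl by (intro continuous_intros c1 c2) (auto simp: add_nonneg_pos)
    then show "continuous_on (UNIV \<times> cbox 0 (2*pi)) (\<lambda>(x, s). (q (s, x) + 1) / sqrt ((q (s, x) + 1)\<^sup>2 + dl\<^sup>2) * Dt q (s, x))"
      by (auto simp: case_prod_unfold intro: continuous_on_subset)
  qed auto
  then show ?thesis by (simp add: Fe_def[abs_def] box_real)
qed

end

context sol begin

lemma ibp:
  assumes dl: "dl > 0" and t: "t > 0"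
  shows "integral {0..2*pi} (\<lambda>s. (q (s, t) + 1) / sqrt ((q (s, t) + 1)\<^sup>2 + dl\<^sup>2) * Dt q (s, t))
    = - integral {0..2*pi} (\<lambda>s. Ds v (s, t) * (dl\<^sup>2 / sqrt ((q (s, t) + 1)\<^sup>2 + dl\<^sup>2) ^ 3 * Ds q (s, t)))"
proof -
  define f where "f = (\<lambda>s. Ds v (s, t))"
  define g where "g = (\<lambda>s. (q (s, t) + 1) / sqrt ((q (s, t) + 1)\<^sup>2 + dl\<^sup>2))"
  define f' where "f' = (\<lambda>s. Ds (Ds v) (s, t))"
  define g' where "g' = (\<lambda>s. dl\<^sup>2 / sqrt ((q (s, t) + 1)\<^sup>2 + dl\<^sup>2) ^ 3 * Ds q (s, t))"
  have df: "(f has_real_derivative f' s) (at s)" for s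
    unfolding f_def f'_def by (rule DsF[OF inF(5)])
  have dg: "(g has_real_derivative g' s) (at s)" for s
  proof -
    have d: "((\<lambda>s. q (s, t) + 1) has_real_derivative Ds q (s, t)) (at s)"
      using DsF[OF inF(3), of t s] by (auto intro!: derivative_eq_intros)
    show ?thesis using DERIV_chain2[OF eta_d2[OF dl] d] by (simp add: g_def g'_def)
  qed
  have cf: "continuous_on UNIV f" unfolding f_def by (rule cont_slice[OF inF(5)])
  have cq: "continuous_on UNIV (\<lambda>s. q (s, t))" by (rule cont_slice[OF inF(3)])
  have cq': "continuous_on UNIV (\<lambda>s. Ds q (s, t))" by (rule cont_slice[OF inF(6)])
  have cf': "continuous_on UNIV f'" unfolding f'_def by (rule cont_slice[OF inF(8)])
  have cg: "continuous_on UNIV g" unfolding g_def using dl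
    by (intro continuous_intros cq) (auto simp: add_nonneg_pos)
  have cg': "continuous_on UNIV g'" unfolding g'_def using dl
    by (intro continuous_intros cq cq') (auto simp: add_nonneg_pos)
  have int1: "(\<lambda>s. f s * g' s) integrable_on {0..2*pi}"
    by (rule integrable_continuous_interval) (auto intro!: continuous_intros continuous_on_subset[OF cf] continuous_on_subset[OF cg'])
  define I where "I = integral {0..2*pi} (\<lambda>s. f s * g' s)"
  have bnd: "f (2*pi) * g (2*pi) = f 0 * g 0"
    using per_Dsv[OF t, of 0] per_q[of t 0] t by (simp add: f_def g_def)
  have "((\<lambda>s. f' s * g s) has_integral (- I)) {0..2*pi}"
  proof (rule integration_by_parts[OF bounded_bilinear_mult])
    show "0 \<le> 2 * pi" by simp
    show "continuous_on {0..2*pi} f" using cf by (rule continuous_on_subset) auto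
    show "continuous_on {0..2*pi} g" using cg by (rule continuous_on_subset) auto
    show "(f has_vector_derivative f' x) (at x)" for x using df has_real_derivative_iff_has_vector_derivative by blast
    show "(g has_vector_derivative g' x) (at x)" for x using dg has_real_derivative_iff_has_vector_derivative by blast
    show "((\<lambda>x. f x * g' x) has_integral f (2 * pi) * g (2 * pi) - f 0 * g 0 - - I) {0..2 * pi}"
      using int1 bnd by (simp add: I_def has_integral_integral)
  qed
  hence "integral {0..2*pi} (\<lambda>s. f' s * g s) = - I" by (rule integral_unique)
  moreover have "(\<lambda>s. (q (s, t) + 1) / sqrt ((q (s, t) + 1)\<^sup>2 + dl\<^sup>2) * Dt q (s, t)) = (\<lambda>s. f' s * g s)"
    by (auto simp: f'_def g_def f6)
  ultimately show ?thesis by (simp add: I_def f_def g'_def)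
qed

end

context sol begin

lemma intc: "continuous_on {0..2*pi} (h :: real \<Rightarrow> real) \<Longrightarrow> h integrable_on {0..2*pi}"
  by (rule integrable_continuous_interval)

lemma deriv_bound:
  assumes dl: "dl > 0" "dl \<le> 1" and t: "t > 0" and B: "\<And>s. s \<in> {0..2*pi} \<Longrightarrow> \<bar>q (s, t) + 1\<bar> \<le> B"
  shows "integral {0..2*pi} (\<lambda>s. (q (s, t) + 1) / sqrt ((q (s, t) + 1)\<^sup>2 + dl\<^sup>2) * Dt q (s, t))
     \<le> 2 * pi * (dl\<^sup>2 * Lc\<^sup>2 * (B + 1) / (4 * e\<^sup>2))"
proof -
  define h where "h = (\<lambda>s. - (Ds v (s, t) * (dl\<^sup>2 / sqrt ((q (s, t) + 1)\<^sup>2 + dl\<^sup>2) ^ 3 * Ds q (s, t))))"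
  have cq: "continuous_on {0..2*pi} (\<lambda>s. q (s, t))" by (rule cont_slice[OF inF(3)])
  have cq': "continuous_on {0..2*pi} (\<lambda>s. Ds q (s, t))" by (rule cont_slice[OF inF(6)])
  have cv': "continuous_on {0..2*pi} (\<lambda>s. Ds v (s, t))" by (rule cont_slice[OF inF(5)])
  have ih: "h integrable_on {0..2*pi}" unfolding h_def using dl
    by (intro intc continuous_intros cq cq' cv') (auto simp: add_nonneg_pos)
  have hb: "h s \<le> dl\<^sup>2 * Lc\<^sup>2 * (B + 1) / (4 * e\<^sup>2)" if s: "s \<in> {0..2*pi}" for s
  proof -
    have "h s = - ((C' (p (s, t) + s) * (q (s, t) + 1) * (q (s, t) + 1) + C (p (s, t) + s) * Ds q (s, t))
        * (dl\<^sup>2 / sqrt ((q (s, t) + 1)\<^sup>2 + dl\<^sup>2) ^ 3 * Ds q (s, t)))"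
      by (simp add: h_def f5[OF t])
    also have "\<dots> \<le> dl\<^sup>2 * Lc\<^sup>2 * sqrt ((q (s, t) + 1)\<^sup>2 + dl\<^sup>2) / (4 * e\<^sup>2)"
      by (rule pw_bound[OF Cb e C'b dl(1)])
    also have "\<dots> \<le> dl\<^sup>2 * Lc\<^sup>2 * (B + 1) / (4 * e\<^sup>2)"
    proof -
      have "sqrt ((q (s, t) + 1)\<^sup>2 + dl\<^sup>2) \<le> \<bar>q (s, t) + 1\<bar> + dl" by (rule eta_le[OF dl(1)])
      also have "\<dots> \<le> B + 1" using B[OF s] dl by linarith
      finally have "sqrt ((q (s, t) + 1)\<^sup>2 + dl\<^sup>2) \<le> B + 1" .
      then show ?thesis using e by (intro divide_right_mono mult_left_mono) auto
    qed
    finally show ?thesis .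
  qed
  have "integral {0..2*pi} (\<lambda>s. (q (s, t) + 1) / sqrt ((q (s, t) + 1)\<^sup>2 + dl\<^sup>2) * Dt q (s, t)) = integral {0..2*pi} h"
    unfolding ibp[OF dl(1) t] h_def by simp
  also have "\<dots> \<le> integral {0..2*pi} (\<lambda>s. dl\<^sup>2 * Lc\<^sup>2 * (B + 1) / (4 * e\<^sup>2))"
    by (rule integral_le[OF ih]) (use hb in auto)
  also have "\<dots> = 2 * pi * (dl\<^sup>2 * Lc\<^sup>2 * (B + 1) / (4 * e\<^sup>2))" by simp
  finally show ?thesis .
qed

definition "Iq \<tau> = integral {0..2*pi} (\<lambda>s. \<bar>q (s, \<tau>) + 1\<bar>)"

lemma Iq_le_Fe: "dl > 0 \<Longrightarrow> Iq \<tau> \<le> Fe dl \<tau>"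
  unfolding Iq_def Fe_def
proof (rule integral_le)
  assume dl: "dl > 0"
  have cq: "continuous_on {0..2*pi} (\<lambda>s. q (s, \<tau>))" by (rule cont_slice[OF inF(3)])
  show "(\<lambda>s. \<bar>q (s, \<tau>) + 1\<bar>) integrable_on {0..2*pi}" by (intro intc continuous_intros cq)
  show "(\<lambda>s. sqrt ((q (s, \<tau>) + 1)\<^sup>2 + dl\<^sup>2)) integrable_on {0..2*pi}" by (intro intc continuous_intros cq)
  show "\<bar>q (x, \<tau>) + 1\<bar> \<le> sqrt ((q (x, \<tau>) + 1)\<^sup>2 + dl\<^sup>2)" for x by (rule eta_ge)
qed

lemma Fe_le_Iq: "dl > 0 \<Longrightarrow> Fe dl \<tau> \<le> Iq \<tau> + 2 * pi * dl"
proof -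
  assume dl: "dl > 0"
  have cq: "continuous_on {0..2*pi} (\<lambda>s. q (s, \<tau>))" by (rule cont_slice[OF inF(3)])
  have "Fe dl \<tau> \<le> integral {0..2*pi} (\<lambda>s. \<bar>q (s, \<tau>) + 1\<bar> + dl)"
    unfolding Fe_def
    by (rule integral_le) (auto intro!: intc continuous_intros cq eta_le dl)
  also have "\<dots> = Iq \<tau> + 2 * pi * dl"
    unfolding Iq_def by (subst integral_add) (auto intro!: intc continuous_intros cq)
  finally show ?thesis .
qed

lemma Iq_decr:
  assumes t: "t > 0"
  shows "Iq t \<le> Iq 0"
proof -
  have "compact ((\<lambda>z. q z + 1) ` ({0..2*pi} \<times> {0..t}))"
    by (intro compact_continuous_image compact_Times compact_Icc continuous_intros
        continuous_on_subset[OF contF[OF inF(3)]]) auto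
  then obtain B where B: "\<And>x. x \<in> (\<lambda>z. q z + 1) ` ({0..2*pi} \<times> {0..t}) \<Longrightarrow> \<bar>x\<bar> \<le> B"
    using compact_imp_bounded bounded_real by metis
  define K where "K = 2 * pi * (Lc\<^sup>2 * (B + 1) / (4 * e\<^sup>2))"
  have K: "K \<ge> 0"
  proof -
    have "B \<ge> 0" using B[of "q (0, 0) + 1"] t by force
    then show ?thesis using e by (simp add: K_def)
  qed
  have main: "Iq t \<le> Iq 0 + dl * (2 * pi + t * K)" if dl: "dl > 0" "dl \<le> 1" for dl
  proof -
    obtain \<xi> where xi: "0 < \<xi>" "\<xi> < t" and mvt: "Fe dl t - Fe dl 0 = (t - 0) *
        integral {0..2*pi} (\<lambda>s. (q (s, \<xi>) + 1) / sqrt ((q (s, \<xi>) + 1)\<^sup>2 + dl\<^sup>2) * Dt q (s, \<xi>))"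
      using MVT2[OF t, of "Fe dl", OF Fe_deriv[OF dl(1)]] by blast
    have Bx: "\<bar>q (s, \<xi>) + 1\<bar> \<le> B" if "s \<in> {0..2*pi}" for s
      using B[of "q (s, \<xi>) + 1"] that xi by force
    have "integral {0..2*pi} (\<lambda>s. (q (s, \<xi>) + 1) / sqrt ((q (s, \<xi>) + 1)\<^sup>2 + dl\<^sup>2) * Dt q (s, \<xi>))
        \<le> 2 * pi * (dl\<^sup>2 * Lc\<^sup>2 * (B + 1) / (4 * e\<^sup>2))"
      by (rule deriv_bound[OF dl xi(1) Bx])
    also have "\<dots> = dl\<^sup>2 * K" by (simp add: K_def)
    also have "\<dots> \<le> dl * K"
    proof -
      have "dl * dl \<le> dl * 1" using dl by (intro mult_left_mono) auto
      then show ?thesis using K by (simp add: power2_eq_square mult_right_mono)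
    qed
    finally have "Fe dl t - Fe dl 0 \<le> t * (dl * K)" using mvt t by (simp add: mult_left_mono)
    moreover have "Iq t \<le> Fe dl t" by (rule Iq_le_Fe[OF dl(1)])
    moreover have "Fe dl 0 \<le> Iq 0 + 2 * pi * dl" by (rule Fe_le_Iq[OF dl(1)])
    ultimately show ?thesis by (simp add: algebra_simps)
  qed
  show ?thesis
  proof (rule field_le_epsilon)
    fix \<epsilon> :: real assume ep: "\<epsilon> > 0"
    define M where "M = 2 * pi + t * K"
    have M: "M > 0" using K t by (simp add: M_def add_pos_nonneg)
    define dl where "dl = min 1 (\<epsilon> / M)"
    have dl: "dl > 0" "dl \<le> 1" using ep M by (auto simp: dl_def)
    have "dl * M \<le> \<epsilon>" using M ep by (simp add: dl_def min_def field_simps)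
    then show "Iq t \<le> Iq 0 + \<epsilon>" using main[OF dl] by (simp add: M_def)
  qed
qed

end

lemma tv_list:
  fixes \<phi> h :: "real \<Rightarrow> real"
  assumes hc: "continuous_on UNIV h" and hn: "\<And>x. h x \<ge> 0"
    and inc: "\<And>a b. a \<le> b \<Longrightarrow> \<bar>\<phi> b - \<phi> a\<bar> \<le> integral {a..b} h"
  shows "sorted xs \<Longrightarrow> set xs \<subseteq> {lo..hi} \<Longrightarrow>
    (\<Sum>i<length xs - 1. \<bar>\<phi> (xs ! Suc i) - \<phi> (xs ! i)\<bar>) \<le> integral {lo..hi} h"
proof (induction xs arbitrary: lo)
  have ih: "\<And>a b. h integrable_on {a..b}"
    by (rule integrable_continuous_interval) (rule continuous_on_subset[OF hc], auto)
  have nn: "\<And>a b. integral {a..b} h \<ge> 0" by (rule integral_nonneg[OF ih]) (use hn in auto)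
  {
    case Nil
    then show ?case using nn by simp
  next
    case (Cons x xs)
    show ?case
    proof (cases xs)
      case Nil
      then show ?thesis using nn by simp
    next
      case (Cons y ys)
      have xy: "x \<le> y" "lo \<le> x" "y \<le> hi" using Cons \<open>sorted (x # xs)\<close> \<open>set (x # xs) \<subseteq> {lo..hi}\<close> by auto
      have s': "sorted xs" using \<open>sorted (x # xs)\<close> by simp
      have set': "set xs \<subseteq> {y..hi}" using Cons \<open>sorted (x # xs)\<close> \<open>set (x # xs) \<subseteq> {lo..hi}\<close> by auto
      have IH: "(\<Sum>i<length xs - 1. \<bar>\<phi> (xs ! Suc i) - \<phi> (xs ! i)\<bar>) \<le> integral {y..hi} h"
        by (rule Cons.IH[OF s' set'])
      have "(\<Sum>i<length (x # xs) - 1. \<bar>\<phi> ((x # xs) ! Suc i) - \<phi> ((x # xs) ! i)\<bar>)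
          = \<bar>\<phi> y - \<phi> x\<bar> + (\<Sum>i<length xs - 1. \<bar>\<phi> (xs ! Suc i) - \<phi> (xs ! i)\<bar>)"
      proof -
        have L: "length (x # xs) - 1 = Suc (length xs - 1)" using Cons by simp
        show ?thesis unfolding L sum.lessThan_Suc_shift using Cons by simp
      qed
      also have "\<dots> \<le> integral {x..y} h + integral {y..hi} h" using inc[OF xy(1)] IH by linarith
      also have "\<dots> \<le> integral {lo..hi} h"
      proof -
        have "integral {lo..x} h + integral {x..hi} h = integral {lo..hi} h"
          by (rule Henstock_Kurzweil_Integration.integral_combine) (use xy ih in auto)
        moreover have "integral {x..y} h + integral {y..hi} h = integral {x..hi} h"
          by (rule Henstock_Kurzweil_Integration.integral_combine) (use xy ih in auto)
        ultimately show ?thesis using nn[of lo x] by linarith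
      qed
      finally show ?thesis .
    qed
  }
qed

context sol begin

lemma phi_deriv: "((\<lambda>r. p (r, t) + r) has_real_derivative q (s, t) + 1) (at s)"
  by (rule f2)

lemma phi_inc: "a \<le> b \<Longrightarrow> \<bar>(p (b, t) + b) - (p (a, t) + a)\<bar> \<le> integral {a..b} (\<lambda>s. \<bar>q (s, t) + 1\<bar>)"
proof -
  assume ab: "a \<le> b"
  have cq: "continuous_on {a..b} (\<lambda>s. q (s, t))" by (rule cont_slice[OF inF(3)])
  have "((\<lambda>s. q (s, t) + 1) has_integral (p (b, t) + b) - (p (a, t) + a)) {a..b}"
  proof (rule fundamental_theorem_of_calculus[OF ab])
    fix x assume "x \<in> {a..b}"
    have "((\<lambda>r. p (r, t) + r) has_real_derivative q (x, t) + 1) (at x within {a..b})"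
      by (rule has_field_derivative_at_within[OF phi_deriv])
    then show "((\<lambda>r. p (r, t) + r) has_vector_derivative q (x, t) + 1) (at x within {a..b})"
      by (simp add: has_real_derivative_iff_has_vector_derivative)
  qed
  hence "(p (b, t) + b) - (p (a, t) + a) = integral {a..b} (\<lambda>s. q (s, t) + 1)" by (simp add: integral_unique)
  moreover have "norm (integral {a..b} (\<lambda>s. q (s, t) + 1)) \<le> integral {a..b} (\<lambda>s. \<bar>q (s, t) + 1\<bar>)"
    by (rule integral_norm_bound_integral) (auto intro!: integrable_continuous_interval continuous_intros cq)
  ultimately show ?thesis by simp
qed

lemma tv_bound:
  "sorted xs \<Longrightarrow> set xs \<subseteq> {0..2*pi} \<Longrightarrow>
    (\<Sum>i<length xs - 1. \<bar>(p (xs ! Suc i, t) + xs ! Suc i) - (p (xs ! i, t) + xs ! i)\<bar>) \<le> Iq t"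
proof -
  have cq: "continuous_on UNIV (\<lambda>s. q (s, t))" by (rule cont_slice[OF inF(3)])
  have "continuous_on UNIV (\<lambda>s. \<bar>q (s, t) + 1\<bar>)" by (intro continuous_intros cq)
  then show "sorted xs \<Longrightarrow> set xs \<subseteq> {0..2*pi} \<Longrightarrow> ?thesis" unfolding Iq_def
    by (rule tv_list[where \<phi>="\<lambda>s. p (s, t) + s"]) (auto intro!: phi_inc)
qed

lemma linf_bound:
  assumes t: "t > 0" and s: "0 \<le> s" "s \<le> 2*pi"
  shows "\<bar>p (s, t) + s\<bar> \<le> 2 * pi + Iq t"
proof -
  have "\<exists>z. 0 < z \<and> z < 2*pi \<and> (\<lambda>h. p (z, t) * h) = (\<lambda>v. 0)"
  proof (rule Rolle_deriv[where f="\<lambda>r. lam r t"])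
    show "0 < 2 * pi" by simp
    show "lam 0 t = lam (2 * pi) t" using per[of t 0] t by simp
    show "continuous_on {0..2 * pi} (\<lambda>r. lam r t)"
      using cont_slice[OF inF(1), of "{0..2*pi}" t] by (simp add: g0_def)
    show "((\<lambda>r. lam r t) has_derivative (\<lambda>h. p (x, t) * h)) (at x)" for x
      using DsF[OF inF(1), of t x] by (simp add: g0_def p_def has_field_derivative_def)
  qed
  then obtain z where z: "0 < z" "z < 2*pi" "(\<lambda>h. p (z, t) * h) = (\<lambda>v. 0)" by blast
  have pz: "p (z, t) = 0" using fun_cong[OF z(3), of 1] by simp
  have d: "\<bar>(p (s, t) + s) - (p (z, t) + z)\<bar> \<le> Iq t"
  proof (cases "z \<le> s")
    case True
    then show ?thesis using tv_bound[of "[z, s]" t] z s by simp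
  next
    case False
    then show ?thesis using tv_bound[of "[s, z]" t] z s by simp
  qed
  then show ?thesis using pz z by linarith
qed

lemma tv_final: "total_variation (\<lambda>s. deriv (\<lambda>r. lam r t) s + s) {0..<2*pi} \<le> ereal (Iq t)"
  unfolding total_variation_def f1
proof (rule SUP_least)
  fix xs assume "xs \<in> {xs. sorted xs \<and> set xs \<subseteq> {0..<2*pi}}"
  hence "sorted xs" "set xs \<subseteq> {0..2*pi}" by auto
  then show "ereal (\<Sum>i<length xs - 1. \<bar>p (xs ! Suc i, t) + xs ! Suc i - (p (xs ! i, t) + xs ! i)\<bar>) \<le> ereal (Iq t)"
    using tv_bound by simp
qed

lemma Iq0: "Iq 0 = integral {0..2*pi} (\<lambda>s. \<bar>deriv (\<lambda>r. deriv (\<lambda>q. lam q 0) r + r) s\<bar>)"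
  unfolding Iq_def f2' ..

end

theorem corollary3p1:
  fixes \<Lambda> :: "real \<Rightarrow> real \<Rightarrow> real \<Rightarrow> real"   (* \<Lambda> \<epsilon> s t *)
    and \<Lambda>0 :: "real \<Rightarrow> real \<Rightarrow> real"            (* \<Lambda>0 \<epsilon> s *)
  assumes init_smooth: "\<And>\<epsilon>. \<epsilon> > 0 \<Longrightarrow> smooth1 (\<Lambda>0 \<epsilon>)"
    and init_periodic: "\<And>\<epsilon> s. \<epsilon> > 0 \<Longrightarrow> \<Lambda>0 \<epsilon> (s + 2*pi) = \<Lambda>0 \<epsilon> s"
    and sol_smooth: "\<And>\<epsilon>. \<epsilon> > 0 \<Longrightarrow> smooth2 (\<lambda>z. \<Lambda> \<epsilon> (fst z) (snd z))"
    and sol_periodic: "\<And>\<epsilon> s t. \<epsilon> > 0 \<Longrightarrow> t \<ge> 0 \<Longrightarrow> \<Lambda> \<epsilon> (s + 2*pi) t = \<Lambda> \<epsilon> s t"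
    and sol_pde: "\<And>\<epsilon> s t. \<epsilon> > 0 \<Longrightarrow> t > 0 \<Longrightarrow>
        deriv (\<lambda>\<tau>. \<Lambda> \<epsilon> s \<tau>) t =
        deriv (\<lambda>\<sigma>. deriv (Jeps \<epsilon>) (deriv (\<lambda>r. \<Lambda> \<epsilon> r t) \<sigma> + \<sigma>)) s"
    and sol_init: "\<And>\<epsilon> s. \<epsilon> > 0 \<Longrightarrow> \<Lambda> \<epsilon> s 0 = \<Lambda>0 \<epsilon> s"
    and init_Linf: "\<exists>C. \<forall>\<epsilon>>0. \<forall>s\<in>{0..2*pi}. \<bar>deriv (\<Lambda>0 \<epsilon>) s + s\<bar> \<le> C"
    and init_L1: "\<exists>C. \<forall>\<epsilon>>0.
        integral {0..2*pi} (\<lambda>s. \<bar>deriv (\<lambda>r. deriv (\<Lambda>0 \<epsilon>) r + r) s\<bar>) \<le> C"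
  shows "\<exists>M. \<forall>\<epsilon>>0. \<forall>T>0.
     (\<forall>s t. 0 \<le> s \<and> s < 2*pi \<and> 0 < t \<and> t < T \<longrightarrow>
        \<bar>deriv (\<lambda>r. \<Lambda> \<epsilon> r t) s + s\<bar> \<le> M) \<and>
     (\<forall>t. 0 < t \<and> t < T \<longrightarrow>
        total_variation (\<lambda>s. deriv (\<lambda>r. \<Lambda> \<epsilon> r t) s + s) {0..<2*pi} \<le> ereal M)"
proof -
  obtain C1 where C1: "\<forall>\<epsilon>>0. integral {0..2*pi} (\<lambda>s. \<bar>deriv (\<lambda>r. deriv (\<Lambda>0 \<epsilon>) r + r) s\<bar>) \<le> C1"
    using init_L1 by blast
  have main: "(\<forall>s t. 0 \<le> s \<and> s < 2*pi \<and> 0 < t \<and> t < T \<longrightarrow>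
        \<bar>deriv (\<lambda>r. \<Lambda> \<epsilon> r t) s + s\<bar> \<le> 2 * pi + C1) \<and>
     (\<forall>t. 0 < t \<and> t < T \<longrightarrow>
        total_variation (\<lambda>s. deriv (\<lambda>r. \<Lambda> \<epsilon> r t) s + s) {0..<2*pi} \<le> ereal (2 * pi + C1))"
    if e: "\<epsilon> > 0" and T: "T > 0" for \<epsilon> T
  proof -
    obtain Fm where Fm: "(\<lambda>z. \<Lambda> \<epsilon> (fst z) (snd z)) \<in> Fm"
      "\<And>g. g \<in> Fm \<Longrightarrow> g differentiable_on UNIV \<and> Ds g \<in> Fm \<and> Dt g \<in> Fm"
      using sol_smooth[OF e] unfolding smooth2_def Ds_def[abs_def] Dt_def[abs_def] by blast
    obtain a c c' L where J: "\<forall>x. (Jeps \<epsilon> has_real_derivative a x) (at x)" "\<forall>x. (a has_real_derivative c x) (at x)"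
      "\<forall>x. (c has_real_derivative c' x) (at x)" "\<forall>x. \<epsilon>\<^sup>2 \<le> c x" "\<forall>x. \<bar>c' x\<bar> \<le> L"
      using Jeps_smooth[OF e] by blast
    have da: "deriv (Jeps \<epsilon>) = a" using J(1) by (auto intro!: ext DERIV_imp_deriv)
    interpret S: sol "\<Lambda> \<epsilon>" Fm a c c' \<epsilon> L
    proof
      show "\<epsilon> > 0" by (rule e)
      show "(\<lambda>z. \<Lambda> \<epsilon> (fst z) (snd z)) \<in> Fm" by (rule Fm(1))
      show "\<And>g. g \<in> Fm \<Longrightarrow> g differentiable_on UNIV" using Fm(2) by blast
      show "\<And>g. g \<in> Fm \<Longrightarrow> Ds g \<in> Fm" using Fm(2) by blast
      show "\<And>g. g \<in> Fm \<Longrightarrow> Dt g \<in> Fm" using Fm(2) by blast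
      show "\<And>s t. t \<ge> 0 \<Longrightarrow> \<Lambda> \<epsilon> (s + 2*pi) t = \<Lambda> \<epsilon> s t" using sol_periodic[OF e] by blast
      show "\<And>s t. t > 0 \<Longrightarrow> deriv (\<lambda>\<tau>. \<Lambda> \<epsilon> s \<tau>) t = deriv (\<lambda>\<sigma>. a (deriv (\<lambda>r. \<Lambda> \<epsilon> r t) \<sigma> + \<sigma>)) s"
        using sol_pde[OF e] da by simp
    qed (use J in auto)
    have I0: "S.Iq 0 \<le> C1"
    proof -
      have "(\<lambda>q. \<Lambda> \<epsilon> q 0) = \<Lambda>0 \<epsilon>" using sol_init[OF e] by auto
      then show ?thesis using S.Iq0 C1 e by simp
    qed
    have It: "S.Iq t \<le> C1" if "t > 0" for t using S.Iq_decr[OF that] I0 by linarith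
    show ?thesis
    proof (intro conjI allI impI)
      fix s t assume st: "0 \<le> s \<and> s < 2*pi \<and> 0 < t \<and> t < T"
      have "\<bar>S.p (s, t) + s\<bar> \<le> 2 * pi + S.Iq t" using st by (intro S.linf_bound) auto
      then show "\<bar>deriv (\<lambda>r. \<Lambda> \<epsilon> r t) s + s\<bar> \<le> 2 * pi + C1" using It[of t] st by (simp add: S.f1)
    next
      fix t assume t: "0 < t \<and> t < T"
      have "total_variation (\<lambda>s. deriv (\<lambda>r. \<Lambda> \<epsilon> r t) s + s) {0..<2*pi} \<le> ereal (S.Iq t)" by (rule S.tv_final)
      also have "\<dots> \<le> ereal (2 * pi + C1)" using It[of t] t pi_gt_zero by (simp del: pi_gt_zero; linarith)
      finally show "total_variation (\<lambda>s. deriv (\<lambda>r. \<Lambda> \<epsilon> r t) s + s) {0..<2*pi} \<le> ereal (2 * pi + C1)" .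
    qed
  qed
  show ?thesis by (rule exI[of _ "2 * pi + C1"]) (use main in blast)
qed

end
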